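(* Consider the setting in the context: the exact solution $(\phi,p)$ of the periodic crime chemotaxis system with the stated regularity, and numerical solutions $(\phi_h^m,p_h^m)$ produced by the SPIMEX scheme (so in particular $p_h^m\ge0$ pointwise). Let $\tilde C>0$ be such that $\|\nabla_hp^0\|_{L^\infty}\le\tilde C$, and let $$B=\max_{0\le m\le T/\tau}\{\|\phi_h(t_m)\|_{L^\infty}+\|p_h(t_m)\|_{L^\infty}+\|(\nabla p)_h(t_m)\|_{L^\infty}\}.$$ Let $m\ge0$ be an index with $\|\phi_h^m\|_{L^\infty}+\|p_h^m\|_{L^\infty}+\|\nabla_hp_h^m\|_{L^\infty}\le B+1$, and define $$T_1^m=\nabla_h\cdot\Big(\frac{\phi_h(t_m)}{p_h(t_m)+p^0}\nabla_h(p_h(t_m)+p^0)-\frac{\phi_h^m}{p_h^m+p^0}\nabla_h(p_h^m+p^0)\Big).$$ Then for every $f_h\in X$, $$|\langle T_1^m,f_h\rangle|\le C_{B,m_p,\tilde C}\big(\|e_\phi^m\|_{L^2}+\|e_p^m\|_{H^1}\big)\|\nabla_hf_h\|_{L^2},$$ where $e_\phi^m=\phi_h(t_m)-\phi_h^m$, $e_p^m=p_h(t_m)-p_h^m$, and $C_{B,m_p,\tilde C}$ is a constant depending only on $B$, $m_p$ and $\tilde C$.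
   Context: PDE: $D,\eta>0$, $T>0$; $p^0$ smooth $\Omega$-periodic with $0<m_p\le p^0\le M_p$; $(\phi,p)$, $\phi,p\ge0$, solves periodically on $\Omega\times[0,T]$: $\partial_t\phi=\frac D4\nabla\cdot(\nabla\phi-\frac{2\phi}{p+p^0}\nabla(p+p^0))-(p+p^0)\phi$, $\partial_tp=\eta D\Delta p+(p+p^0)\phi-p$, with $\phi\in C^3([0,T];C^4_{per}(\Omega))$, $p\in C^3([0,T];C^5_{per}(\Omega))$ ($C^m_{per}$: $C^m$ with periodic derivatives up to order $m$). Grid and operators: $\Omega$ a square of side $L$, $h=L/N$, $X$ the periodic grid functions; $u_h(t)$ is the grid restriction of $u(\cdot,t)$ (also for $p^0$); $(D_xu)_{i+1/2,j}=(u_{i+1,j}-u_{i,j})/h$, $D_y$ analogous; $(d_xf)_{i,j}=(f_{i+1/2,j}-f_{i-1/2,j})/h$, $d_y$ analogous; $\nabla_h=(D_x,D_y)$, $\nabla_h\cdot(f^x,f^y)=d_xf^x+d_yf^y$, $\Delta_h=\nabla_h\cdot\nabla_h$; $\nabla_h\cdot(w\nabla_hv)=d_x(\bar wD_xv)+d_y(\bar wD_yv)$ with $\bar w$ the face-centred average of $w$. $\langle u,v\rangle=h^2\sum_{i,j=1}^Nu_{i,j}v_{i,j}$, $\|u\|_{L^2}^2=\langle u,u\rangle$, $\|u\|_{H^1}^2=\|u\|_{L^2}^2+\|\nabla_hu\|_{L^2}^2$, $\|u\|_{L^\infty}=\max|u_{i,j}|$. SPIMEX scheme: $\tau>0$,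 $t_k=k\tau$, $\phi_h^0=\phi_h(0)$, $p_h^0=p_h(0)$; predictor for $k\ge1$: $\frac{\tilde\phi_h^{k+1}-\phi_h^k}{\tau}=\frac D8\Delta_h(\tilde\phi_h^{k+1}+\phi_h^k)-\frac{3D}4\nabla_h\cdot(\frac{\phi_h^k}{p_h^k+p^0}\nabla_h(p_h^k+p^0))+\frac D4\nabla_h\cdot(\frac{\phi_h^{k-1}}{p_h^{k-1}+p^0}\nabla_h(p_h^{k-1}+p^0))-\frac32(p_h^k+p^0)\phi_h^k+\frac12(p_h^{k-1}+p^0)\phi_h^{k-1}$, $\frac{\tilde p_h^{k+1}-p_h^k}{\tau}=\frac{\eta D}2\Delta_h(\tilde p_h^{k+1}+p_h^k)+\frac32[(p_h^k+p^0)\phi_h^k-p_h^k]-\frac12[(p_h^{k-1}+p^0)\phi_h^{k-1}-p_h^{k-1}]$; for $k=0$: $\frac{\tilde\phi_h^1-\phi_h^0}{\tau}=\frac D8\Delta_h(\tilde\phi_h^1+\phi_h^0)-\frac D2\nabla_h\cdot(\frac{\phi_h^0}{p_h^0+p^0}\nabla_h(p_h^0+p^0))-(p_h^0+p^0)\phi_h^0$, $\frac{\tilde p_h^1-p_h^0}{\tau}=\frac{\eta D}2\Delta_h(\tilde p_h^1+p_h^0)+(p_h^0+p^0)\phi_h^0-p_h^0$. Corrector: $(\phi_h^{k+1},p_h^{k+1})$ minimizes $\frac12(\|\phi-\tilde\phi_h^{k+1}\|_{L^2}^2+\|p-\tilde p_h^{k+1}\|_{H^1}^2)$ over $X\times X$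 subject to $\phi\ge0$, $p\ge0$ pointwise. *)

theory Defs
  imports "HOL-Analysis.Analysis"
begin

text \<open>Periodic grid functions are represented as maps int => int => real, periodic
  with period N in both indices; the value at index (i,j) corresponds to the grid point
  (i*h, j*h). Face-centred quantities at (i+1/2, j) resp. (i, j+1/2) are stored at index (i,j).\<close>

type_synonym gridfun = "int \<Rightarrow> int \<Rightarrow> real"

definition grid_periodic :: "nat \<Rightarrow> gridfun \<Rightarrow> bool" where
  "grid_periodic N u \<longleftrightarrow> (\<forall>i j. u (i + int N) j = u i j \<and> u i (j + int N) = u i j)"

definition fun_periodic :: "real \<Rightarrow> (real \<times> real \<Rightarrow> real) \<Rightarrow> bool" where
  "fun_periodic L U \<longleftrightarrow> (\<forall>x y. U (x + L, y) = U (x, y) \<and> U (x, y + L) = U (x, y))"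

definition restrict :: "real \<Rightarrow> (real \<times> real \<Rightarrow> real) \<Rightarrow> gridfun" where
  "restrict h U = (\<lambda>i j. U (real_of_int i * h, real_of_int j * h))"

definition Dx :: "real \<Rightarrow> gridfun \<Rightarrow> gridfun" where
  "Dx h u = (\<lambda>i j. (u (i + 1) j - u i j) / h)"

definition Dy :: "real \<Rightarrow> gridfun \<Rightarrow> gridfun" where
  "Dy h u = (\<lambda>i j. (u i (j + 1) - u i j) / h)"

definition dx :: "real \<Rightarrow> gridfun \<Rightarrow> gridfun" where
  "dx h f = (\<lambda>i j. (f i j - f (i - 1) j) / h)"

definition dy :: "real \<Rightarrow> gridfun \<Rightarrow> gridfun" where
  "dy h f = (\<lambda>i j. (f i j - f i (j - 1)) / h)"

definition avgx :: "gridfun \<Rightarrow> gridfun" where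
  "avgx w = (\<lambda>i j. (w i j + w (i + 1) j) / 2)"

definition avgy :: "gridfun \<Rightarrow> gridfun" where
  "avgy w = (\<lambda>i j. (w i j + w i (j + 1)) / 2)"

definition div_coef_grad :: "real \<Rightarrow> gridfun \<Rightarrow> gridfun \<Rightarrow> gridfun" where
  "div_coef_grad h w v =
     (\<lambda>i j. dx h (\<lambda>a b. avgx w a b * Dx h v a b) i j
          + dy h (\<lambda>a b. avgy w a b * Dy h v a b) i j)"

definition chemo_flux_div :: "real \<Rightarrow> gridfun \<Rightarrow> gridfun \<Rightarrow> gridfun \<Rightarrow> gridfun" where
  "chemo_flux_div h phi p p0 =
     div_coef_grad h (\<lambda>i j. phi i j / (p i j + p0 i j)) (\<lambda>i j. p i j + p0 i j)"

definition ip :: "real \<Rightarrow> nat \<Rightarrow> gridfun \<Rightarrow> gridfun \<Rightarrow> real" where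
  "ip h N u v = h\<^sup>2 * (\<Sum>i\<in>{1..int N}. \<Sum>j\<in>{1..int N}. u i j * v i j)"

definition normL2 :: "real \<Rightarrow> nat \<Rightarrow> gridfun \<Rightarrow> real" where
  "normL2 h N u = sqrt (ip h N u u)"

definition gradL2 :: "real \<Rightarrow> nat \<Rightarrow> gridfun \<Rightarrow> real" where
  "gradL2 h N u = sqrt (ip h N (Dx h u) (Dx h u) + ip h N (Dy h u) (Dy h u))"

definition normH1 :: "real \<Rightarrow> nat \<Rightarrow> gridfun \<Rightarrow> real" where
  "normH1 h N u = sqrt ((normL2 h N u)\<^sup>2 + (gradL2 h N u)\<^sup>2)"

definition normLinf :: "nat \<Rightarrow> gridfun \<Rightarrow> real" where
  "normLinf N u = Max {\<bar>u i j\<bar> | i j. i \<in> {1..int N} \<and> j \<in> {1..int N}}"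

definition gradLinf :: "real \<Rightarrow> nat \<Rightarrow> gridfun \<Rightarrow> real" where
  "gradLinf h N u = max (normLinf N (Dx h u)) (normLinf N (Dy h u))"

definition pdx :: "(real \<times> real \<Rightarrow> real) \<Rightarrow> real \<times> real \<Rightarrow> real" where
  "pdx U z = deriv (\<lambda>s. U (s, snd z)) (fst z)"

definition pdy :: "(real \<times> real \<Rightarrow> real) \<Rightarrow> real \<times> real \<Rightarrow> real" where
  "pdy U z = deriv (\<lambda>s. U (fst z, s)) (snd z)"

definition cgradLinf :: "real \<Rightarrow> nat \<Rightarrow> (real \<times> real \<Rightarrow> real) \<Rightarrow> real" where
  "cgradLinf h N U = max (normLinf N (restrict h (pdx U))) (normLinf N (restrict h (pdy U)))"

end

theory Submission
  imports Defs
begin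

lemma sum_shift1:
  fixes u :: "int \<Rightarrow> real"
  assumes "u (int N + 1) = u 1"
  shows "(\<Sum>i\<in>{1..int N}. u (i + 1)) = (\<Sum>i\<in>{1..int N}. u i)"
proof (cases "N = 0")
  case True then show ?thesis by simp
next
  case False
  have "(\<Sum>i\<in>{1..int N}. u (i + 1)) = (\<Sum>i\<in>{2..int N + 1}. u i)"
    by (rule sum.reindex_bij_witness[of _ "\<lambda>i. i - 1" "\<lambda>i. i + 1"]) auto
  also have "\<dots> = (\<Sum>i\<in>{2..int N}. u i) + u (int N + 1)"
  proof -
    have "{2..int N + 1} = insert (int N + 1) {2..int N}" using False by auto
    then show ?thesis by simp
  qed
  also have "\<dots> = u 1 + (\<Sum>i\<in>{2..int N}. u i)" using assms by simp
  also have "\<dots> = (\<Sum>i\<in>{1..int N}. u i)"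
  proof -
    have "{1..int N} = insert 1 {2..int N}" using False by auto
    then show ?thesis by simp
  qed
  finally show ?thesis .
qed

lemma per_mult:
  assumes "\<forall>i j. u (i + int N) j = u i j \<and> u i (j + int N) = u i j"
  shows "u (i + k * int N) (j + l * int N) = u i j"
proof -
  have a: "u (i + k * int N) j = u i j" for i j k
  proof (induct k rule: int_induct[where k=0])
    case base then show ?case by simp
  next
    case (step1 k)
    have e: "i + (k + 1) * int N = (i + k * int N) + int N" by (simp add: algebra_simps)
    show ?case unfolding e using assms step1 by simp
  next
    case (step2 k)
    have e: "i + k * int N = (i + (k - 1) * int N) + int N" by (simp add: algebra_simps)
    have "u (i + (k - 1) * int N) j = u (i + k * int N) j" unfolding e using assms by simp
    then show ?case using step2 by simp
  qed
  have b: "u i (j + l * int N) = u i j" for i j l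
  proof (induct l rule: int_induct[where k=0])
    case base then show ?case by simp
  next
    case (step1 k)
    have e: "j + (k + 1) * int N = (j + k * int N) + int N" by (simp add: algebra_simps)
    show ?case unfolding e using assms step1 by simp
  next
    case (step2 k)
    have e: "j + k * int N = (j + (k - 1) * int N) + int N" by (simp add: algebra_simps)
    have "u i (j + (k - 1) * int N) = u i (j + k * int N)" unfolding e using assms by simp
    then show ?case using step2 by simp
  qed
  show ?thesis using a b by simp
qed

lemma le_normLinf:
  assumes "grid_periodic N u" "0 < N"
  shows "\<bar>u i j\<bar> \<le> normLinf N u"
proof -
  define i' where "i' = (i - 1) mod int N + 1"
  define j' where "j' = (j - 1) mod int N + 1"
  have ii: "i = i' + ((i - 1) div int N) * int N" unfolding i'_def
    using div_mult_mod_eq[of "i - 1" "int N"] by linarith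
  have jj: "j = j' + ((j - 1) div int N) * int N" unfolding j'_def
    using div_mult_mod_eq[of "j - 1" "int N"] by linarith
  have "u i j = u i' j'"
    using per_mult[of u N i' "(i - 1) div int N" j' "(j - 1) div int N"] assms(1) ii jj
    unfolding grid_periodic_def by metis
  moreover have "i' \<in> {1..int N}" "j' \<in> {1..int N}"
  proof -
    have n: "0 < int N" using assms(2) by simp
    show "i' \<in> {1..int N}" unfolding i'_def using pos_mod_bound[OF n, of "i - 1"] pos_mod_sign[OF n, of "i - 1"] by simp
    show "j' \<in> {1..int N}" unfolding j'_def using pos_mod_bound[OF n, of "j - 1"] pos_mod_sign[OF n, of "j - 1"] by simp
  qed
  moreover have "finite {\<bar>u i j\<bar> | i j. i \<in> {1..int N} \<and> j \<in> {1..int N}}"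
  proof -
    have "{\<bar>u i j\<bar> | i j. i \<in> {1..int N} \<and> j \<in> {1..int N}} = (\<lambda>(i,j). \<bar>u i j\<bar>) ` ({1..int N} \<times> {1..int N})"
      by force
    then show ?thesis by simp
  qed
  ultimately show ?thesis unfolding normLinf_def by (intro Max_ge) auto
qed

lemma normLinf_nonneg:
  assumes "0 < N" shows "0 \<le> normLinf N u"
proof -
  have "finite {\<bar>u i j\<bar> | i j. i \<in> {1..int N} \<and> j \<in> {1..int N}}"
  proof -
    have "{\<bar>u i j\<bar> | i j. i \<in> {1..int N} \<and> j \<in> {1..int N}} = (\<lambda>(i,j). \<bar>u i j\<bar>) ` ({1..int N} \<times> {1..int N})"
      by force
    then show ?thesis by simp
  qed
  moreover have "\<bar>u 1 1\<bar> \<in> {\<bar>u i j\<bar> | i j. i \<in> {1..int N} \<and> j \<in> {1..int N}}" using assms by force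
  ultimately have "\<bar>u 1 1\<bar> \<le> normLinf N u" unfolding normLinf_def by (rule Max_ge)
  then show ?thesis by linarith
qed

lemma gp_simps:
  assumes "grid_periodic N w"
  shows "w (int N) j = w 0 j" "w (int N + 1) j = w 1 j" "w i (int N) = w i 0" "w i (int N + 1) = w i 1"
  using assms unfolding grid_periodic_def
  by (metis add.commute add_0)+

lemma sbp1:
  fixes g f :: "int \<Rightarrow> real"
  assumes "g (int N) = g 0" "f (int N + 1) = f 1"
  shows "(\<Sum>i\<in>{1..int N}. (g i - g (i - 1)) / h * f i) = - (\<Sum>i\<in>{1..int N}. g i * ((f (i + 1) - f i) / h))"
proof -
  have s: "(\<Sum>i\<in>{1..int N}. g i * f (i + 1)) = (\<Sum>i\<in>{1..int N}. g (i - 1) * f i)"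
    using sum_shift1[of "\<lambda>i. g (i - 1) * f i" N] assms by simp
  have eq1: "(\<Sum>i\<in>{1..int N}. (g i - g (i - 1)) / h * f i) =
     ((\<Sum>i\<in>{1..int N}. g i * f i) - (\<Sum>i\<in>{1..int N}. g (i - 1) * f i)) / h"
    by (simp add: sum_divide_distrib[symmetric] sum_subtractf[symmetric] algebra_simps)
  have eq2: "(\<Sum>i\<in>{1..int N}. g i * ((f (i + 1) - f i) / h)) =
     ((\<Sum>i\<in>{1..int N}. g i * f (i + 1)) - (\<Sum>i\<in>{1..int N}. g i * f i)) / h"
    by (simp add: sum_divide_distrib[symmetric] sum_subtractf[symmetric] algebra_simps)
  show ?thesis unfolding eq1 eq2 s by (simp only: minus_divide_left minus_diff_eq)
qed

lemma ip_div:
  assumes "grid_periodic N w" "grid_periodic N v" "grid_periodic N f"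
  shows "ip h N (div_coef_grad h w v) f = - h\<^sup>2 * (\<Sum>i\<in>{1..int N}. \<Sum>j\<in>{1..int N}.
     avgx w i j * Dx h v i j * Dx h f i j + avgy w i j * Dy h v i j * Dy h f i j)"
proof -
  define G where "G = (\<lambda>a b. avgx w a b * Dx h v a b)"
  define H where "H = (\<lambda>a b. avgy w a b * Dy h v a b)"
  have X: "(\<Sum>i\<in>{1..int N}. \<Sum>j\<in>{1..int N}. dx h G i j * f i j)
      = - (\<Sum>i\<in>{1..int N}. \<Sum>j\<in>{1..int N}. G i j * Dx h f i j)"
  proof -
    have "(\<Sum>i\<in>{1..int N}. \<Sum>j\<in>{1..int N}. dx h G i j * f i j)
        = (\<Sum>j\<in>{1..int N}. \<Sum>i\<in>{1..int N}. dx h G i j * f i j)" by (rule sum.swap)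
    also have "\<dots> = (\<Sum>j\<in>{1..int N}. - (\<Sum>i\<in>{1..int N}. G i j * Dx h f i j))"
    proof (rule sum.cong[OF refl])
      fix j
      show "(\<Sum>i\<in>{1..int N}. dx h G i j * f i j) = - (\<Sum>i\<in>{1..int N}. G i j * Dx h f i j)"
        unfolding dx_def Dx_def
        by (rule sbp1) (simp_all add: G_def avgx_def Dx_def gp_simps[OF assms(1)] gp_simps[OF assms(2)] gp_simps[OF assms(3)])
    qed
    also have "\<dots> = - (\<Sum>i\<in>{1..int N}. \<Sum>j\<in>{1..int N}. G i j * Dx h f i j)"
    proof -
      have "(\<Sum>j\<in>{1..int N}. \<Sum>i\<in>{1..int N}. G i j * Dx h f i j) = (\<Sum>i\<in>{1..int N}. \<Sum>j\<in>{1..int N}. G i j * Dx h f i j)"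
        by (rule sum.swap)
      then show ?thesis by (simp only: sum_negf)
    qed
    finally show ?thesis .
  qed
  have Y: "(\<Sum>i\<in>{1..int N}. \<Sum>j\<in>{1..int N}. dy h H i j * f i j)
      = - (\<Sum>i\<in>{1..int N}. \<Sum>j\<in>{1..int N}. H i j * Dy h f i j)"
  proof -
    have "(\<Sum>i\<in>{1..int N}. \<Sum>j\<in>{1..int N}. dy h H i j * f i j)
        = (\<Sum>i\<in>{1..int N}. - (\<Sum>j\<in>{1..int N}. H i j * Dy h f i j))"
    proof (rule sum.cong[OF refl])
      fix i
      show "(\<Sum>j\<in>{1..int N}. dy h H i j * f i j) = - (\<Sum>j\<in>{1..int N}. H i j * Dy h f i j)"
        unfolding dy_def Dy_def
        by (rule sbp1) (simp_all add: H_def avgy_def Dy_def gp_simps[OF assms(1)] gp_simps[OF assms(2)] gp_simps[OF assms(3)])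
    qed
    then show ?thesis by (simp add: sum_negf)
  qed
  have "ip h N (div_coef_grad h w v) f = h\<^sup>2 * ((\<Sum>i\<in>{1..int N}. \<Sum>j\<in>{1..int N}. dx h G i j * f i j)
     + (\<Sum>i\<in>{1..int N}. \<Sum>j\<in>{1..int N}. dy h H i j * f i j))"
    unfolding ip_def div_coef_grad_def G_def H_def
    by (simp add: sum.distrib[symmetric] algebra_simps)
  also have "\<dots> = - h\<^sup>2 * (\<Sum>i\<in>{1..int N}. \<Sum>j\<in>{1..int N}.
     avgx w i j * Dx h v i j * Dx h f i j + avgy w i j * Dy h v i j * Dy h f i j)"
    unfolding X Y unfolding G_def H_def by (simp add: sum.distrib algebra_simps sum_negf)
  finally show ?thesis .
qed

lemma da:
  fixes \<phi> \<psi> p r z mp Bb :: real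
  assumes "0 < mp" "0 \<le> \<psi>" "\<psi> \<le> Bb" "0 \<le> p" "0 \<le> r" "mp \<le> z"
  shows "\<bar>\<phi> / (p + z) - \<psi> / (r + z)\<bar> \<le> \<bar>\<phi> - \<psi>\<bar> / mp + Bb * \<bar>p - r\<bar> / mp\<^sup>2"
proof -
  have pz: "mp \<le> p + z" "mp \<le> r + z" using assms by auto
  have pz0: "0 < p + z" "0 < r + z" using assms by auto
  have eq: "\<phi> / (p + z) - \<psi> / (r + z) = (\<phi> - \<psi>) / (p + z) + \<psi> * (r - p) / ((p + z) * (r + z))"
  proof -
    have n: "p + z \<noteq> 0" "r + z \<noteq> 0" using pz0 by auto
    show ?thesis using n by (simp add: divide_simps) (simp add: algebra_simps)
  qed
  have 1: "\<bar>(\<phi> - \<psi>) / (p + z)\<bar> \<le> \<bar>\<phi> - \<psi>\<bar> / mp"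
    using pz0 pz assms(1) by (simp add: abs_div frac_le)
  have "\<bar>\<psi> * (r - p) / ((p + z) * (r + z))\<bar> = \<psi> * \<bar>p - r\<bar> / ((p + z) * (r + z))"
    using pz0 assms by (simp add: abs_mult abs_div abs_minus_commute)
  also have "\<dots> \<le> Bb * \<bar>p - r\<bar> / mp\<^sup>2"
  proof (rule frac_le)
    show "0 \<le> Bb * \<bar>p - r\<bar>" using assms by simp
    show "\<psi> * \<bar>p - r\<bar> \<le> Bb * \<bar>p - r\<bar>" using assms by (simp add: mult_right_mono)
    show "0 < mp\<^sup>2" using assms by simp
    show "mp\<^sup>2 \<le> (p + z) * (r + z)" unfolding power2_eq_square
      using pz assms(1) by (intro mult_mono) auto
  qed
  finally have 2: "\<bar>\<psi> * (r - p) / ((p + z) * (r + z))\<bar> \<le> Bb * \<bar>p - r\<bar> / mp\<^sup>2" .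
  show ?thesis unfolding eq using 1 2 abs_triangle_ineq[of "(\<phi> - \<psi>) / (p + z)" "\<psi> * (r - p) / ((p + z) * (r + z))"]
    by linarith
qed

lemma ab:
  fixes \<phi> p z mp Bb :: real
  assumes "0 < mp" "0 \<le> \<phi>" "\<phi> \<le> Bb" "0 \<le> p" "mp \<le> z"
  shows "\<bar>\<phi> / (p + z)\<bar> \<le> Bb / mp"
  using assms by (simp add: abs_div frac_le)

lemma pw:
  fixes \<phi>1 \<phi>2 \<psi>1 \<psi>2 p1 p2 r1 r2 z1 z2 mp Bb Ct h :: real
  assumes "0 < mp" "0 \<le> \<phi>1" "\<phi>1 \<le> Bb" "0 \<le> \<phi>2" "\<phi>2 \<le> Bb"
    "0 \<le> \<psi>1" "\<psi>1 \<le> Bb" "0 \<le> \<psi>2" "\<psi>2 \<le> Bb" "0 \<le> p1" "0 \<le> p2" "0 \<le> r1" "0 \<le> r2"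
    "mp \<le> z1" "mp \<le> z2" "\<bar>(r2 + z2 - (r1 + z1)) / h\<bar> \<le> Bb + Ct"
  shows "\<bar>((\<phi>1 / (p1 + z1) + \<phi>2 / (p2 + z2)) / 2) * ((p2 + z2 - (p1 + z1)) / h)
          - ((\<psi>1 / (r1 + z1) + \<psi>2 / (r2 + z2)) / 2) * ((r2 + z2 - (r1 + z1)) / h)\<bar>
        \<le> (Bb + Ct) / (2 * mp) * (\<bar>\<phi>1 - \<psi>1\<bar> + \<bar>\<phi>2 - \<psi>2\<bar>)
         + (Bb + Ct) * Bb / (2 * mp\<^sup>2) * (\<bar>p1 - r1\<bar> + \<bar>p2 - r2\<bar>)
         + Bb / mp * \<bar>((p2 - r2) - (p1 - r1)) / h\<bar>"
proof -
  define a1 where "a1 = \<phi>1 / (p1 + z1)"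
  define a2 where "a2 = \<phi>2 / (p2 + z2)"
  define b1 where "b1 = \<psi>1 / (r1 + z1)"
  define b2 where "b2 = \<psi>2 / (r2 + z2)"
  define Q where "Q = (r2 + z2 - (r1 + z1)) / h"
  define E where "E = ((p2 - r2) - (p1 - r1)) / h"
  have eqd: "(p2 + z2 - (p1 + z1)) / h = Q + E" unfolding Q_def E_def add_divide_distrib[symmetric] by (simp add: algebra_simps)
  have eq: "((a1 + a2) / 2) * (Q + E) - ((b1 + b2) / 2) * Q = ((a1 - b1) + (a2 - b2)) / 2 * Q + (a1 + a2) / 2 * E"
    by (simp add: field_simps)
  have d1: "\<bar>a1 - b1\<bar> \<le> \<bar>\<phi>1 - \<psi>1\<bar> / mp + Bb * \<bar>p1 - r1\<bar> / mp\<^sup>2"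
    unfolding a1_def b1_def using assms by (intro da) auto
  have d2: "\<bar>a2 - b2\<bar> \<le> \<bar>\<phi>2 - \<psi>2\<bar> / mp + Bb * \<bar>p2 - r2\<bar> / mp\<^sup>2"
    unfolding a2_def b2_def using assms by (intro da) auto
  have e1: "\<bar>a1\<bar> \<le> Bb / mp" unfolding a1_def using assms by (intro ab) auto
  have e2: "\<bar>a2\<bar> \<le> Bb / mp" unfolding a2_def using assms by (intro ab) auto
  have Qb: "\<bar>Q\<bar> \<le> Bb + Ct" unfolding Q_def using assms by simp
  have t1: "\<bar>((a1 - b1) + (a2 - b2)) / 2 * Q\<bar> \<le> (\<bar>a1 - b1\<bar> + \<bar>a2 - b2\<bar>) / 2 * (Bb + Ct)"
    unfolding abs_mult using Qb by (intro mult_mono) auto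
  have t2: "\<bar>(a1 + a2) / 2 * E\<bar> \<le> Bb / mp * \<bar>E\<bar>"
    proof -
    have "\<bar>(a1 + a2) / 2\<bar> = \<bar>a1 + a2\<bar> / 2" by simp
    moreover obtain M where M: "M = Bb / mp" by blast
    have "\<bar>a1\<bar> \<le> M" "\<bar>a2\<bar> \<le> M" using e1 e2 M by auto
    then have "\<bar>(a1 + a2) / 2\<bar> \<le> M" by (simp add: abs_le_iff)
    then have "\<bar>(a1 + a2) / 2\<bar> \<le> Bb / mp" using M by simp
    then show ?thesis unfolding abs_mult by (intro mult_right_mono) auto
  qed
  have "(\<bar>a1 - b1\<bar> + \<bar>a2 - b2\<bar>) / 2 * (Bb + Ct) \<le>
     ((\<bar>\<phi>1 - \<psi>1\<bar> / mp + Bb * \<bar>p1 - r1\<bar> / mp\<^sup>2) + (\<bar>\<phi>2 - \<psi>2\<bar> / mp + Bb * \<bar>p2 - r2\<bar> / mp\<^sup>2)) / 2 * (Bb + Ct)"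
  proof (rule mult_right_mono)
    show "0 \<le> Bb + Ct" using Qb abs_ge_zero[of Q] by linarith
    show "(\<bar>a1 - b1\<bar> + \<bar>a2 - b2\<bar>) / 2 \<le> ((\<bar>\<phi>1 - \<psi>1\<bar> / mp + Bb * \<bar>p1 - r1\<bar> / mp\<^sup>2) + (\<bar>\<phi>2 - \<psi>2\<bar> / mp + Bb * \<bar>p2 - r2\<bar> / mp\<^sup>2)) / 2"
      by (rule divide_right_mono[OF add_mono[OF d1 d2]]) simp
  qed
  also have "\<dots> = (Bb + Ct) / (2 * mp) * (\<bar>\<phi>1 - \<psi>1\<bar> + \<bar>\<phi>2 - \<psi>2\<bar>)
         + (Bb + Ct) * Bb / (2 * mp\<^sup>2) * (\<bar>p1 - r1\<bar> + \<bar>p2 - r2\<bar>)"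
    using assms(1) by (simp add: field_simps power2_eq_square)
  finally have t1': "\<bar>((a1 - b1) + (a2 - b2)) / 2 * Q\<bar> \<le> (Bb + Ct) / (2 * mp) * (\<bar>\<phi>1 - \<psi>1\<bar> + \<bar>\<phi>2 - \<psi>2\<bar>)
         + (Bb + Ct) * Bb / (2 * mp\<^sup>2) * (\<bar>p1 - r1\<bar> + \<bar>p2 - r2\<bar>)" using t1 by linarith
  show ?thesis
    unfolding a1_def[symmetric] a2_def[symmetric] b1_def[symmetric] b2_def[symmetric] eqd Q_def[symmetric] E_def[symmetric] eq
    using t1' t2 abs_triangle_ineq[of "((a1 - b1) + (a2 - b2)) / 2 * Q" "(a1 + a2) / 2 * E"] by linarith
qed

definition Ag :: "nat \<Rightarrow> (int \<times> int) set" where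
  "Ag N = {1..int N} \<times> {1..int N}"

definition nn :: "nat \<Rightarrow> gridfun \<Rightarrow> real" where
  "nn N u = L2_set (\<lambda>x. u (fst x) (snd x)) (Ag N)"

lemma dsum: "(\<Sum>i\<in>{1..int N}. \<Sum>j\<in>{1..int N}. F i j) = (\<Sum>x\<in>Ag N. F (fst x) (snd x))"
  unfolding Ag_def by (simp add: sum.cartesian_product split_def)

lemma finite_Ag[simp]: "finite (Ag N)" unfolding Ag_def by simp

lemma nn_sq: "(nn N u)\<^sup>2 = (\<Sum>i\<in>{1..int N}. \<Sum>j\<in>{1..int N}. u i j * u i j)"
  unfolding nn_def L2_set_def dsum by (simp add: sum_nonneg power2_eq_square)

lemma nn_nonneg[simp]: "0 \<le> nn N u" unfolding nn_def by simp

lemma sqrt_h: "0 < h \<Longrightarrow> sqrt (h\<^sup>2 * X) = h * sqrt X"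
  by (simp add: real_sqrt_mult)

lemma normL2_eq: "0 < h \<Longrightarrow> normL2 h N u = h * nn N u"
  unfolding normL2_def ip_def nn_sq[symmetric] using sqrt_h by simp

lemma gradL2_eq: "0 < h \<Longrightarrow> gradL2 h N u = h * sqrt ((nn N (Dx h u))\<^sup>2 + (nn N (Dy h u))\<^sup>2)"
  unfolding gradL2_def ip_def nn_sq[symmetric] using sqrt_h
  by (simp add: distrib_left[symmetric])

lemma normH1_eq: "0 < h \<Longrightarrow> normH1 h N u = h * sqrt ((nn N u)\<^sup>2 + (nn N (Dx h u))\<^sup>2 + (nn N (Dy h u))\<^sup>2)"
proof -
  assume h: "0 < h"
  have "(normL2 h N u)\<^sup>2 + (gradL2 h N u)\<^sup>2 = h\<^sup>2 * ((nn N u)\<^sup>2 + (nn N (Dx h u))\<^sup>2 + (nn N (Dy h u))\<^sup>2)"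
    using h by (simp add: normL2_eq gradL2_eq power_mult_distrib algebra_simps)
  then show ?thesis unfolding normH1_def using sqrt_h h by simp
qed

lemma nn_shiftx:
  assumes "grid_periodic N u"
  shows "nn N (\<lambda>i j. u (i + 1) j) = nn N u"
proof -
  have "(\<Sum>i\<in>{1..int N}. \<Sum>j\<in>{1..int N}. u (i + 1) j * u (i + 1) j) = (\<Sum>i\<in>{1..int N}. \<Sum>j\<in>{1..int N}. u i j * u i j)"
    by (rule sum_shift1[where u = "\<lambda>i. \<Sum>j\<in>{1..int N}. u i j * u i j"]) (simp add: gp_simps[OF assms])
  then have "(nn N (\<lambda>i j. u (i + 1) j))\<^sup>2 = (nn N u)\<^sup>2" unfolding nn_sq by simp
  then show ?thesis using nn_nonneg by (metis power2_eq_iff_nonneg)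
qed

lemma nn_shifty:
  assumes "grid_periodic N u"
  shows "nn N (\<lambda>i j. u i (j + 1)) = nn N u"
proof -
  have "(\<Sum>i\<in>{1..int N}. \<Sum>j\<in>{1..int N}. u i (j + 1) * u i (j + 1)) = (\<Sum>i\<in>{1..int N}. \<Sum>j\<in>{1..int N}. u i j * u i j)"
    by (rule sum.cong[OF refl], rule sum_shift1[where u = "\<lambda>j. u _ j * u _ j"]) (simp add: gp_simps[OF assms])
  then have "(nn N (\<lambda>i j. u i (j + 1)))\<^sup>2 = (nn N u)\<^sup>2" unfolding nn_sq by simp
  then show ?thesis using nn_nonneg by (metis power2_eq_iff_nonneg)
qed

lemma L2_abs: "L2_set (\<lambda>x. \<bar>f x\<bar>) A = L2_set f A"
  unfolding L2_set_def by simp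

lemma L2_scale: "0 \<le> c \<Longrightarrow> L2_set (\<lambda>x. c * \<bar>f x\<bar>) A = c * L2_set f A"
  using L2_set_right_distrib[of c "\<lambda>x. \<bar>f x\<bar>" A] L2_abs[of f A] by simp

lemma nn_bound:
  assumes pw: "\<And>i j. \<bar>G i j\<bar> \<le> c1 * (\<bar>a i j\<bar> + \<bar>a' i j\<bar>) + c2 * (\<bar>b i j\<bar> + \<bar>b' i j\<bar>) + c3 * \<bar>d i j\<bar>"
    and c: "0 \<le> c1" "0 \<le> c2" "0 \<le> c3"
    and sa: "nn N a' = nn N a" and sb: "nn N b' = nn N b"
  shows "nn N G \<le> 2 * c1 * nn N a + 2 * c2 * nn N b + c3 * nn N d"
proof -
  let ?A = "Ag N"
  let ?f = "\<lambda>(u::gridfun) x. u (fst x) (snd x)"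
  have "nn N G = L2_set (\<lambda>x. \<bar>?f G x\<bar>) ?A" unfolding nn_def L2_abs ..
  also have "\<dots> \<le> L2_set (\<lambda>x. c1 * \<bar>?f a x\<bar> + c1 * \<bar>?f a' x\<bar> + c2 * \<bar>?f b x\<bar> + c2 * \<bar>?f b' x\<bar> + c3 * \<bar>?f d x\<bar>) ?A"
    by (rule L2_set_mono) (use pw in \<open>auto simp: algebra_simps\<close>)
  also have "\<dots> \<le> L2_set (\<lambda>x. c1 * \<bar>?f a x\<bar> + c1 * \<bar>?f a' x\<bar> + c2 * \<bar>?f b x\<bar> + c2 * \<bar>?f b' x\<bar>) ?A + L2_set (\<lambda>x. c3 * \<bar>?f d x\<bar>) ?A"
    by (rule L2_set_triangle_ineq)
  also have "L2_set (\<lambda>x. c1 * \<bar>?f a x\<bar> + c1 * \<bar>?f a' x\<bar> + c2 * \<bar>?f b x\<bar> + c2 * \<bar>?f b' x\<bar>) ?A \<le>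
     L2_set (\<lambda>x. c1 * \<bar>?f a x\<bar> + c1 * \<bar>?f a' x\<bar> + c2 * \<bar>?f b x\<bar>) ?A + L2_set (\<lambda>x. c2 * \<bar>?f b' x\<bar>) ?A"
    by (rule L2_set_triangle_ineq)
  also have "L2_set (\<lambda>x. c1 * \<bar>?f a x\<bar> + c1 * \<bar>?f a' x\<bar> + c2 * \<bar>?f b x\<bar>) ?A \<le>
     L2_set (\<lambda>x. c1 * \<bar>?f a x\<bar> + c1 * \<bar>?f a' x\<bar>) ?A + L2_set (\<lambda>x. c2 * \<bar>?f b x\<bar>) ?A"
    by (rule L2_set_triangle_ineq)
  also have "L2_set (\<lambda>x. c1 * \<bar>?f a x\<bar> + c1 * \<bar>?f a' x\<bar>) ?A \<le>
     L2_set (\<lambda>x. c1 * \<bar>?f a x\<bar>) ?A + L2_set (\<lambda>x. c1 * \<bar>?f a' x\<bar>) ?A"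
    by (rule L2_set_triangle_ineq)
  finally have "nn N G \<le> c1 * nn N a + c1 * nn N a' + c2 * nn N b + c2 * nn N b' + c3 * nn N d"
    unfolding nn_def using c by (simp add: L2_scale)
  then show ?thesis using sa sb by simp
qed

lemma gp_comb:
  assumes "grid_periodic N u" "grid_periodic N v"
  shows "grid_periodic N (\<lambda>i j. F (u i j) (v i j))"
  using assms unfolding grid_periodic_def by simp

lemma gp_Dx: "grid_periodic N u \<Longrightarrow> grid_periodic N (Dx h u)"
  unfolding grid_periodic_def Dx_def by (metis add.commute add.left_commute)

lemma gp_Dy: "grid_periodic N u \<Longrightarrow> grid_periodic N (Dy h u)"
  unfolding grid_periodic_def Dy_def by (metis add.commute add.left_commute)

definition Kc :: "real \<Rightarrow> real \<Rightarrow> real \<Rightarrow> real" where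
  "Kc B mp Ct = 4 * (((\<bar>B\<bar> + 1) + Ct) / (2 * mp)) + 4 * (((\<bar>B\<bar> + 1) + Ct) * (\<bar>B\<bar> + 1) / (2 * mp\<^sup>2))
     + 2 * ((\<bar>B\<bar> + 1) / mp)"

lemma Kc_pos: "0 < mp \<Longrightarrow> 0 < Ct \<Longrightarrow> 0 < Kc B mp Ct"
proof -
  assume a: "0 < mp" "0 < Ct"
  have b: "0 < \<bar>B\<bar> + 1" by linarith
  have "0 < 4 * (((\<bar>B\<bar> + 1) + Ct) / (2 * mp))" using a b by simp
  moreover have "0 < 4 * (((\<bar>B\<bar> + 1) + Ct) * (\<bar>B\<bar> + 1) / (2 * mp\<^sup>2))" using a b by simp
  moreover have "0 < 2 * ((\<bar>B\<bar> + 1) / mp)" using a b by simp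
  ultimately show ?thesis unfolding Kc_def by linarith
qed

lemma main:
  fixes B mp Ct h cg :: real and N :: nat and phie pe p0 phim pm f :: gridfun
  assumes mp: "0 < mp" and Ct: "0 < Ct" and h: "0 < h" and N: "0 < N"
    and per: "grid_periodic N phie" "grid_periodic N pe" "grid_periodic N p0"
      "grid_periodic N phim" "grid_periodic N pm" "grid_periodic N f"
    and pos: "\<And>i j. 0 \<le> phie i j" "\<And>i j. 0 \<le> pe i j" "\<And>i j. mp \<le> p0 i j"
      "\<And>i j. 0 \<le> phim i j" "\<And>i j. 0 \<le> pm i j"
    and g0: "gradLinf h N p0 \<le> Ct"
    and cg: "0 \<le> cg" and be: "normLinf N phie + normLinf N pe + cg \<le> B"
    and bm: "normLinf N phim + normLinf N pm + gradLinf h N pm \<le> B + 1"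
  shows "\<bar>ip h N (\<lambda>i j. chemo_flux_div h phie pe p0 i j - chemo_flux_div h phim pm p0 i j) f\<bar>
            \<le> Kc B mp Ct * (normL2 h N (\<lambda>i j. phie i j - phim i j) + normH1 h N (\<lambda>i j. pe i j - pm i j))
                * gradL2 h N f"
proof -
  define Bb where "Bb = \<bar>B\<bar> + 1"
  define c1 where "c1 = (Bb + Ct) / (2 * mp)"
  define c2 where "c2 = (Bb + Ct) * Bb / (2 * mp\<^sup>2)"
  define c3 where "c3 = Bb / mp"
  have Kc_eq: "Kc B mp Ct = 4 * c1 + 4 * c2 + 2 * c3" unfolding Kc_def c1_def c2_def c3_def Bb_def ..
  have Bb0: "0 \<le> Bb" unfolding Bb_def by simp
  have c0: "0 \<le> c1" "0 \<le> c2" "0 \<le> c3" unfolding c1_def c2_def c3_def using Bb0 mp Ct by auto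
  have nl: "0 \<le> normLinf N u" for u using normLinf_nonneg[OF N] .
  have le: "\<And>u i j. grid_periodic N u \<Longrightarrow> \<bar>u i j\<bar> \<le> normLinf N u" using le_normLinf N by blast
  have b_phie: "phie i j \<le> Bb" for i j
    using le[OF per(1), of i j] nl[of pe] cg be unfolding Bb_def by linarith
  have b_pe: "pe i j \<le> Bb" for i j
    using le[OF per(2), of i j] nl[of phie] cg be unfolding Bb_def by linarith
  have glnn: "0 \<le> gradLinf h N pm" unfolding gradLinf_def using nl by (simp add: le_max_iff_disj)
  have b_phim: "phim i j \<le> Bb" for i j
    using le[OF per(4), of i j] nl[of pm] glnn bm unfolding Bb_def by linarith
  have b_pm: "pm i j \<le> Bb" for i j
    using le[OF per(5), of i j] nl[of phim] glnn bm unfolding Bb_def by linarith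
  have b_Dxpm: "\<bar>Dx h pm i j\<bar> \<le> Bb" for i j
    using le[OF gp_Dx[OF per(5)], of h i j] nl[of phim] nl[of pm] bm unfolding Bb_def gradLinf_def by linarith
  have b_Dypm: "\<bar>Dy h pm i j\<bar> \<le> Bb" for i j
    using le[OF gp_Dy[OF per(5)], of h i j] nl[of phim] nl[of pm] bm unfolding Bb_def gradLinf_def by linarith
  have b_Dxp0: "\<bar>Dx h p0 i j\<bar> \<le> Ct" for i j
    using le[OF gp_Dx[OF per(3)], of h i j] g0 unfolding gradLinf_def by linarith
  have b_Dyp0: "\<bar>Dy h p0 i j\<bar> \<le> Ct" for i j
    using le[OF gp_Dy[OF per(3)], of h i j] g0 unfolding gradLinf_def by linarith
  define ae where "ae = (\<lambda>i j. phie i j / (pe i j + p0 i j))"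
  define am where "am = (\<lambda>i j. phim i j / (pm i j + p0 i j))"
  define qe where "qe = (\<lambda>i j. pe i j + p0 i j)"
  define qm where "qm = (\<lambda>i j. pm i j + p0 i j)"
  define ef where "ef = (\<lambda>i j. phie i j - phim i j)"
  define ep where "ep = (\<lambda>i j. pe i j - pm i j)"
  define Gx where "Gx = (\<lambda>i j. avgx ae i j * Dx h qe i j - avgx am i j * Dx h qm i j)"
  define Gy where "Gy = (\<lambda>i j. avgy ae i j * Dy h qe i j - avgy am i j * Dy h qm i j)"
  have pae: "grid_periodic N ae" using per unfolding grid_periodic_def ae_def by simp
  have pam: "grid_periodic N am" using per unfolding grid_periodic_def am_def by simp
  have pqe: "grid_periodic N qe" using per unfolding grid_periodic_def qe_def by simp
  have pqm: "grid_periodic N qm" using per unfolding grid_periodic_def qm_def by simp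
  have pef: "grid_periodic N ef" using per unfolding grid_periodic_def ef_def by simp
  have pep: "grid_periodic N ep" using per unfolding grid_periodic_def ep_def by simp
  have ipeq: "ip h N (\<lambda>i j. chemo_flux_div h phie pe p0 i j - chemo_flux_div h phim pm p0 i j) f
      = - h\<^sup>2 * (\<Sum>x\<in>Ag N. Gx (fst x) (snd x) * Dx h f (fst x) (snd x) + Gy (fst x) (snd x) * Dy h f (fst x) (snd x))"
  proof -
    have "ip h N (\<lambda>i j. chemo_flux_div h phie pe p0 i j - chemo_flux_div h phim pm p0 i j) f
       = ip h N (div_coef_grad h ae qe) f - ip h N (div_coef_grad h am qm) f"
    proof -
      have e1: "chemo_flux_div h phie pe p0 = div_coef_grad h ae qe" unfolding chemo_flux_div_def ae_def qe_def ..
      have e2: "chemo_flux_div h phim pm p0 = div_coef_grad h am qm" unfolding chemo_flux_div_def am_def qm_def ..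
      show ?thesis unfolding e1 e2 ip_def by (simp add: sum_subtractf right_diff_distrib left_diff_distrib)
    qed
    also have "\<dots> = - h\<^sup>2 * (\<Sum>i\<in>{1..int N}. \<Sum>j\<in>{1..int N}. Gx i j * Dx h f i j + Gy i j * Dy h f i j)"
    proof -
      let ?Xe = "\<lambda>i j. avgx ae i j * Dx h qe i j * Dx h f i j + avgy ae i j * Dy h qe i j * Dy h f i j"
      let ?Xm = "\<lambda>i j. avgx am i j * Dx h qm i j * Dx h f i j + avgy am i j * Dy h qm i j * Dy h f i j"
      have pt: "?Xe i j - ?Xm i j = Gx i j * Dx h f i j + Gy i j * Dy h f i j" for i j
        unfolding Gx_def Gy_def by (simp add: algebra_simps)
      have "(\<Sum>i\<in>{1..int N}. \<Sum>j\<in>{1..int N}. ?Xe i j) - (\<Sum>i\<in>{1..int N}. \<Sum>j\<in>{1..int N}. ?Xm i j)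
          = (\<Sum>i\<in>{1..int N}. \<Sum>j\<in>{1..int N}. ?Xe i j - ?Xm i j)"
        by (simp only: sum_subtractf)
      also have "\<dots> = (\<Sum>i\<in>{1..int N}. \<Sum>j\<in>{1..int N}. Gx i j * Dx h f i j + Gy i j * Dy h f i j)"
        by (simp only: pt)
      finally have "(\<Sum>i\<in>{1..int N}. \<Sum>j\<in>{1..int N}. ?Xe i j) - (\<Sum>i\<in>{1..int N}. \<Sum>j\<in>{1..int N}. ?Xm i j)
          = (\<Sum>i\<in>{1..int N}. \<Sum>j\<in>{1..int N}. Gx i j * Dx h f i j + Gy i j * Dy h f i j)" .
      then show ?thesis unfolding ip_div[OF pae pqe per(6)] ip_div[OF pam pqm per(6)]
        by (simp only: mult_minus_left right_diff_distrib[symmetric] minus_diff_eq diff_minus_eq_add) (simp add: algebra_simps)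
    qed
    finally show ?thesis unfolding dsum .
  qed
  have pwx: "\<bar>Gx i j\<bar> \<le> c1 * (\<bar>ef i j\<bar> + \<bar>ef (i + 1) j\<bar>) + c2 * (\<bar>ep i j\<bar> + \<bar>ep (i + 1) j\<bar>) + c3 * \<bar>Dx h ep i j\<bar>" for i j
  proof -
    have "\<bar>(pm (i + 1) j + p0 (i + 1) j - (pm i j + p0 i j)) / h\<bar> \<le> Bb + Ct"
    proof -
      have "(pm (i + 1) j + p0 (i + 1) j - (pm i j + p0 i j)) / h = Dx h pm i j + Dx h p0 i j"
        unfolding Dx_def by (simp add: add_divide_distrib[symmetric] algebra_simps)
      then show ?thesis using b_Dxpm[of i j] b_Dxp0[of i j] abs_triangle_ineq[of "Dx h pm i j" "Dx h p0 i j"] by simp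
    qed
    then have "\<bar>((phie i j / (pe i j + p0 i j) + phie (i + 1) j / (pe (i + 1) j + p0 (i + 1) j)) / 2) * ((pe (i + 1) j + p0 (i + 1) j - (pe i j + p0 i j)) / h)
          - ((phim i j / (pm i j + p0 i j) + phim (i + 1) j / (pm (i + 1) j + p0 (i + 1) j)) / 2) * ((pm (i + 1) j + p0 (i + 1) j - (pm i j + p0 i j)) / h)\<bar>
        \<le> (Bb + Ct) / (2 * mp) * (\<bar>phie i j - phim i j\<bar> + \<bar>phie (i + 1) j - phim (i + 1) j\<bar>)
         + (Bb + Ct) * Bb / (2 * mp\<^sup>2) * (\<bar>pe i j - pm i j\<bar> + \<bar>pe (i + 1) j - pm (i + 1) j\<bar>)
         + Bb / mp * \<bar>((pe (i + 1) j - pm (i + 1) j) - (pe i j - pm i j)) / h\<bar>"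
      by (intro pw mp pos b_phie b_phim b_pe b_pm)
    then show ?thesis
      unfolding Gx_def avgx_def Dx_def ae_def am_def qe_def qm_def ef_def ep_def c1_def c2_def c3_def .
  qed
  have pwy: "\<bar>Gy i j\<bar> \<le> c1 * (\<bar>ef i j\<bar> + \<bar>ef i (j + 1)\<bar>) + c2 * (\<bar>ep i j\<bar> + \<bar>ep i (j + 1)\<bar>) + c3 * \<bar>Dy h ep i j\<bar>" for i j
  proof -
    have "\<bar>(pm i (j + 1) + p0 i (j + 1) - (pm i j + p0 i j)) / h\<bar> \<le> Bb + Ct"
    proof -
      have "(pm i (j + 1) + p0 i (j + 1) - (pm i j + p0 i j)) / h = Dy h pm i j + Dy h p0 i j"
        unfolding Dy_def by (simp add: add_divide_distrib[symmetric] algebra_simps)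
      then show ?thesis using b_Dypm[of i j] b_Dyp0[of i j] abs_triangle_ineq[of "Dy h pm i j" "Dy h p0 i j"] by simp
    qed
    then have "\<bar>((phie i j / (pe i j + p0 i j) + phie i (j + 1) / (pe i (j + 1) + p0 i (j + 1))) / 2) * ((pe i (j + 1) + p0 i (j + 1) - (pe i j + p0 i j)) / h)
          - ((phim i j / (pm i j + p0 i j) + phim i (j + 1) / (pm i (j + 1) + p0 i (j + 1))) / 2) * ((pm i (j + 1) + p0 i (j + 1) - (pm i j + p0 i j)) / h)\<bar>
        \<le> (Bb + Ct) / (2 * mp) * (\<bar>phie i j - phim i j\<bar> + \<bar>phie i (j + 1) - phim i (j + 1)\<bar>)
         + (Bb + Ct) * Bb / (2 * mp\<^sup>2) * (\<bar>pe i j - pm i j\<bar> + \<bar>pe i (j + 1) - pm i (j + 1)\<bar>)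
         + Bb / mp * \<bar>((pe i (j + 1) - pm i (j + 1)) - (pe i j - pm i j)) / h\<bar>"
      by (intro pw mp pos b_phie b_phim b_pe b_pm)
    then show ?thesis
      unfolding Gy_def avgy_def Dy_def ae_def am_def qe_def qm_def ef_def ep_def c1_def c2_def c3_def .
  qed
  have nGx: "nn N Gx \<le> 2 * c1 * nn N ef + 2 * c2 * nn N ep + c3 * nn N (Dx h ep)"
    by (rule nn_bound[OF pwx c0 nn_shiftx[OF pef] nn_shiftx[OF pep]])
  have nGy: "nn N Gy \<le> 2 * c1 * nn N ef + 2 * c2 * nn N ep + c3 * nn N (Dy h ep)"
    by (rule nn_bound[OF pwy c0 nn_shifty[OF pef] nn_shifty[OF pep]])
  define S where "S = sqrt ((nn N ep)\<^sup>2 + (nn N (Dx h ep))\<^sup>2 + (nn N (Dy h ep))\<^sup>2)"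
  define F where "F = sqrt ((nn N (Dx h f))\<^sup>2 + (nn N (Dy h f))\<^sup>2)"
  have S1: "nn N ep \<le> S" "nn N (Dx h ep) \<le> S" "nn N (Dy h ep) \<le> S" unfolding S_def
    by (rule real_le_rsqrt; simp)+
  have F1: "nn N (Dx h f) \<le> F" "nn N (Dy h f) \<le> F" unfolding F_def
    by (rule real_le_rsqrt; simp)+
  have sumG: "nn N Gx + nn N Gy \<le> Kc B mp Ct * (nn N ef + S)"
  proof -
    have "nn N Gx + nn N Gy \<le> 4 * c1 * nn N ef + 4 * c2 * nn N ep + c3 * nn N (Dx h ep) + c3 * nn N (Dy h ep)"
      using nGx nGy by linarith
    also have "\<dots> \<le> 4 * c1 * nn N ef + 4 * c2 * S + c3 * S + c3 * S"
      using S1 c0 by (intro add_mono mult_left_mono order_refl) auto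
    also have "\<dots> \<le> Kc B mp Ct * (nn N ef + S)"
    proof -
      have S0: "0 \<le> S" using S1(1) nn_nonneg[of N ep] by linarith
      have e: "Kc B mp Ct * (nn N ef + S) = (4 * c1 * nn N ef + 4 * c2 * S + c3 * S + c3 * S) + (4 * c1 * S + 4 * c2 * nn N ef + 2 * c3 * nn N ef)"
        unfolding Kc_eq by (simp add: algebra_simps)
      have "0 \<le> 4 * c1 * S + 4 * c2 * nn N ef + 2 * c3 * nn N ef"
        using c0 S0 nn_nonneg[of N ef] by simp
      then show ?thesis unfolding e by linarith
    qed
    finally show ?thesis .
  qed
  have CS: "\<bar>\<Sum>x\<in>Ag N. Gx (fst x) (snd x) * Dx h f (fst x) (snd x) + Gy (fst x) (snd x) * Dy h f (fst x) (snd x)\<bar>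
      \<le> nn N Gx * nn N (Dx h f) + nn N Gy * nn N (Dy h f)"
  proof -
    have "\<bar>\<Sum>x\<in>Ag N. Gx (fst x) (snd x) * Dx h f (fst x) (snd x) + Gy (fst x) (snd x) * Dy h f (fst x) (snd x)\<bar>
       \<le> (\<Sum>x\<in>Ag N. \<bar>Gx (fst x) (snd x)\<bar> * \<bar>Dx h f (fst x) (snd x)\<bar>) + (\<Sum>x\<in>Ag N. \<bar>Gy (fst x) (snd x)\<bar> * \<bar>Dy h f (fst x) (snd x)\<bar>)"
      unfolding sum.distrib[symmetric]
      by (rule order_trans[OF sum_abs sum_mono]) (simp add: abs_mult[symmetric] abs_triangle_ineq)
    also have "\<dots> \<le> nn N Gx * nn N (Dx h f) + nn N Gy * nn N (Dy h f)"
      unfolding nn_def by (intro add_mono L2_set_mult_ineq)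
    finally show ?thesis .
  qed
  have CS2: "nn N Gx * nn N (Dx h f) + nn N Gy * nn N (Dy h f) \<le> (nn N Gx + nn N Gy) * F"
    using F1 by (simp add: distrib_right add_mono mult_left_mono)
  have "\<bar>ip h N (\<lambda>i j. chemo_flux_div h phie pe p0 i j - chemo_flux_div h phim pm p0 i j) f\<bar>
     \<le> h\<^sup>2 * ((nn N Gx + nn N Gy) * F)"
    unfolding ipeq abs_mult abs_minus power2_abs using CS CS2
    by (simp add: mult_left_mono)
  also have "\<dots> \<le> h\<^sup>2 * ((Kc B mp Ct * (nn N ef + S)) * F)"
    using sumG by (intro mult_left_mono mult_right_mono) (auto simp: F_def)
  also have "\<dots> = Kc B mp Ct * (h * nn N ef + h * S) * (h * F)"
    by (simp add: algebra_simps power2_eq_square)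
  also have "\<dots> = Kc B mp Ct * (normL2 h N ef + normH1 h N ep) * gradL2 h N f"
    unfolding normL2_eq[OF h] normH1_eq[OF h] gradL2_eq[OF h] S_def F_def ..
  finally show ?thesis unfolding ef_def ep_def .
qed

lemma gp_restrict:
  assumes "fun_periodic L U" "0 < N"
  shows "grid_periodic N (restrict (L / real N) U)"
proof -
  have e: "real N * (L / real N) = L" using assms(2) by simp
  have "U (real_of_int (i + int N) * (L / real N), y) = U (real_of_int i * (L / real N), y)" for i y
  proof -
    have "real_of_int (i + int N) * (L / real N) = real_of_int i * (L / real N) + L"
      using e by (simp add: algebra_simps)
    then show ?thesis using assms(1) unfolding fun_periodic_def by simp
  qed
  moreover have "U (x, real_of_int (j + int N) * (L / real N)) = U (x, real_of_int j * (L / real N))" for j x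
  proof -
    have "real_of_int (j + int N) * (L / real N) = real_of_int j * (L / real N) + L"
      using e by (simp add: algebra_simps)
    then show ?thesis using assms(1) unfolding fun_periodic_def by simp
  qed
  ultimately show ?thesis unfolding grid_periodic_def restrict_def by simp
qed

lemma cg_nonneg: "0 < N \<Longrightarrow> 0 \<le> cgradLinf h N U"
  unfolding cgradLinf_def using normLinf_nonneg by (simp add: le_max_iff_disj)

theorem lemma3p4:
  fixes B mp Ct :: real
  assumes "0 < mp" and "0 < Ct"
  shows "\<exists>C>0. \<forall>(L::real) (N::nat) (Phi::real\<times>real\<Rightarrow>real) (P::real\<times>real\<Rightarrow>real)
            (P0::real\<times>real\<Rightarrow>real) (Mp::real) (phim::gridfun) (pm::gridfun) (f::gridfun).
     let h = L / real N;
         phie = restrict h Phi; pe = restrict h P; p0 = restrict h P0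
     in (0 < L \<and> 0 < N
         \<and> fun_periodic L Phi \<and> fun_periodic L P \<and> fun_periodic L P0
         \<and> (\<forall>z. Phi differentiable (at z) \<and> P differentiable (at z) \<and> P0 differentiable (at z))
         \<and> (\<forall>z. 0 \<le> Phi z \<and> 0 \<le> P z \<and> mp \<le> P0 z \<and> P0 z \<le> Mp)
         \<and> gradLinf h N p0 \<le> Ct
         \<and> normLinf N phie + normLinf N pe + cgradLinf h N P \<le> B
         \<and> grid_periodic N phim \<and> grid_periodic N pm \<and> grid_periodic N f
         \<and> (\<forall>i j. 0 \<le> phim i j \<and> 0 \<le> pm i j)
         \<and> normLinf N phim + normLinf N pm + gradLinf h N pm \<le> B + 1)
        \<longrightarrow> \<bar>ip h N (\<lambda>i j. chemo_flux_div h phie pe p0 i j - chemo_flux_div h phim pm p0 i j) f\<bar>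
            \<le> C * (normL2 h N (\<lambda>i j. phie i j - phim i j) + normH1 h N (\<lambda>i j. pe i j - pm i j))
                * gradL2 h N f"
  unfolding Let_def
  apply (rule exI[of _ "Kc B mp Ct"])
  apply (intro conjI allI impI)
   apply (rule Kc_pos[OF assms])
  subgoal for L N Phi P P0 Mp phim pm f
    apply (elim conjE)
    apply (rule main[where cg = "cgradLinf (L / real N) N P"])
                        apply (simp_all add: assms gp_restrict cg_nonneg)
    apply (simp_all add: restrict_def)
    done
  done

end
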